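(* Let $\theta\in(0,1)$ be arbitrary (rational or irrational), $\alpha_0,\alpha_1,\alpha_2\in\mathbb{Z}$ with $\alpha_2\ne0$, $u_0\in L^2(0,2\pi)$, and $p,q$ positive coprime integers, $t_r=2\pi p/q$. Let $u$ be the $L^2$ solution of $\partial_t u=-i\sum_{m=0}^2\alpha_m(-i\partial_x)^m u$, $u(x,0)=u_0(x)$, $e^{i2\pi\theta}\partial_x^m u(0,t)=\partial_x^m u(2\pi,t)$ ($m=0,1$). Then there exist constants $c_0,\dots,c_{q-1}\in\mathbb{C}$ such that for a.e. $x\in[0,2\pi]$, $$u(x,t_r)=e^{i\theta x}\sum_{k=0}^{q-1}c_k\,z_0^*\!\left(x-s_\theta t_r-\tfrac{2\pi k}{q}\right),\qquad z_0(x)=e^{-i\theta x}u_0(x),\ s_\theta=\alpha_1+2\alpha_2\theta .$$ In particular $u(\cdot,t_r)$ is a finite linear combination of translated copies of $u_0$ for every $\theta\in(0,1)$.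
   Context: The $L^2$ solution is $u(x,t)=\sum_{j\in\mathbb{Z}}\langle u_0,\phi_j\rangle e^{-iP(j+\theta)t}\phi_j(x)$ with $P(\lambda)=\alpha_0+\alpha_1\lambda+\alpha_2\lambda^2$, $\phi_j(x)=e^{i(j+\theta)x}/\sqrt{2\pi}$, $\langle f,g\rangle=\int_0^{2\pi}f\bar g$. $f^*$ denotes the $2\pi$-periodic extension of a function $f$ on $[0,2\pi)$: $f^*(x)=f(x-2\pi m)$ for $2\pi m\le x<2\pi(m+1)$. *)

theory Defs
  imports "HOL-Analysis.Analysis"
begin

definition phi :: "real \<Rightarrow> int \<Rightarrow> real \<Rightarrow> complex" where
  "phi \<theta> j x = exp (\<i> * complex_of_real ((real_of_int j + \<theta>) * x)) / complex_of_real (sqrt (2 * pi))"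

definition inner_L2 :: "(real \<Rightarrow> complex) \<Rightarrow> (real \<Rightarrow> complex) \<Rightarrow> complex" where
  "inner_L2 f g = (LINT x:{0..2*pi}|lborel. f x * cnj (g x))"

definition Ppoly :: "int \<Rightarrow> int \<Rightarrow> int \<Rightarrow> real \<Rightarrow> real" where
  "Ppoly a0 a1 a2 l = real_of_int a0 + real_of_int a1 * l + real_of_int a2 * l^2"

definition in_L2 :: "(real \<Rightarrow> complex) \<Rightarrow> bool" where
  "in_L2 f \<longleftrightarrow> f \<in> borel_measurable lborel \<and>
     set_integrable lborel {0..2*pi} (\<lambda>x. (cmod (f x))^2)"

definition partial_sol :: "real \<Rightarrow> int \<Rightarrow> int \<Rightarrow> int \<Rightarrow> (real \<Rightarrow> complex) \<Rightarrow> nat \<Rightarrow> real \<Rightarrow> real \<Rightarrow> complex" where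
  "partial_sol \<theta> a0 a1 a2 u0 N x t =
     (\<Sum>j\<in>{-int N..int N}. inner_L2 u0 (phi \<theta> j)
        * exp (- \<i> * complex_of_real (Ppoly a0 a1 a2 (real_of_int j + \<theta>) * t)) * phi \<theta> j x)"

definition is_L2_solution :: "real \<Rightarrow> int \<Rightarrow> int \<Rightarrow> int \<Rightarrow> (real \<Rightarrow> complex) \<Rightarrow> (real \<Rightarrow> real \<Rightarrow> complex) \<Rightarrow> bool" where
  "is_L2_solution \<theta> a0 a1 a2 u0 u \<longleftrightarrow>
     (\<forall>t. in_L2 (\<lambda>x. u x t) \<and>
        (\<lambda>N. LINT x:{0..2*pi}|lborel. (cmod (u x t - partial_sol \<theta> a0 a1 a2 u0 N x t))^2)
          \<longlonglongrightarrow> 0)"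

definition per_ext :: "(real \<Rightarrow> complex) \<Rightarrow> real \<Rightarrow> complex" where
  "per_ext f x = f (x - 2 * pi * of_int \<lfloor>x / (2 * pi)\<rfloor>)"

end

theory Submission
  imports Defs
begin

lemma integrable_mult_bdd:
  fixes G :: "real \<Rightarrow> complex"
  assumes int: "integrable lborel G" and [measurable]: "h \<in> borel_measurable borel"
    and bd: "\<And>x. norm (h x) \<le> B"
  shows "integrable lborel (\<lambda>x. G x * h x)"
proof (rule Bochner_Integration.integrable_bound[of _ "\<lambda>x. B * norm (G x)"])
  show "integrable lborel (\<lambda>x. B * norm (G x))" using int by auto
  have [measurable]: "G \<in> borel_measurable borel" using int by auto
  show "(\<lambda>x. G x * h x) \<in> borel_measurable lborel" by measurable
  show "AE x in lborel. norm (G x * h x) \<le> norm (B * norm (G x))"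
  proof (rule AE_I2)
    fix x
    have "B \<ge> 0" using bd[of x] norm_ge_zero order_trans by blast
    have "norm (G x * h x) = norm (G x) * norm (h x)" by (simp add: norm_mult)
    also have "\<dots> \<le> norm (G x) * B" by (intro mult_left_mono bd) auto
    finally show "norm (G x * h x) \<le> norm (B * norm (G x))" using \<open>B \<ge> 0\<close>
      by (simp add: mult.commute)
  qed
qed

lemma cos_pow_expand:
  "complex_of_real (cos y ^ n) =
    (\<Sum>l\<le>n. of_nat (n choose l) / 2 ^ n * exp (\<i> * of_real (of_int (2 * int l - int n) * y)))"
proof -
  have c: "complex_of_real (cos y) = (exp (\<i> * of_real y) + exp (- (\<i> * of_real y))) / 2"
    by (simp add: cos_of_real[symmetric] cos_exp_eq)
  have "complex_of_real (cos y ^ n) = (exp (\<i> * of_real y) + exp (- (\<i> * of_real y))) ^ n / 2 ^ n"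
    by (simp add: c power_divide)
  also have "\<dots> = (\<Sum>l\<le>n. of_nat (n choose l) * exp (\<i> * of_real y) ^ l * exp (- (\<i> * of_real y)) ^ (n - l)) / 2 ^ n"
    by (simp add: binomial_ring)
  also have "\<dots> = (\<Sum>l\<le>n. of_nat (n choose l) / 2 ^ n * exp (\<i> * of_real (of_int (2 * int l - int n) * y)))"
    unfolding sum_divide_distrib
  proof (intro sum.cong refl)
    fix l assume "l \<in> {..n}"
    then have ln: "l \<le> n" by simp
    have "exp (\<i> * of_real y) ^ l * exp (- (\<i> * of_real y)) ^ (n - l)
        = exp (of_nat l * (\<i> * of_real y)) * exp (of_nat (n - l) * (- (\<i> * of_real y)))"
      by (simp only: exp_of_nat_mult)
    also have "\<dots> = exp (of_nat l * (\<i> * of_real y) + of_nat (n - l) * (- (\<i> * of_real y)))"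
      by (simp add: exp_diff exp_minus divide_inverse)
    also have "of_nat l * (\<i> * of_real y) + of_nat (n - l) * (- (\<i> * of_real y))
       = \<i> * of_real (of_int (2 * int l - int n) * y)"
      using ln by (simp add: of_nat_diff algebra_simps)
    finally show "of_nat (n choose l) * exp (\<i> * of_real y) ^ l * exp (- (\<i> * of_real y)) ^ (n - l) / 2 ^ n
      = of_nat (n choose l) / 2 ^ n * exp (\<i> * of_real (of_int (2 * int l - int n) * y))"
      by simp
  qed
  finally show ?thesis .
qed

lemma trig_moment:
  fixes G :: "real \<Rightarrow> complex"
  assumes int: "integrable lborel G"
    and hz: "\<And>j::int. (\<integral>x. G x * exp (\<i> * of_real (of_int j * x)) \<partial>lborel) = 0"
  shows "(\<integral>x. G x * of_real (cos (x - m) ^ n) \<partial>lborel) = 0"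
proof -
  define c where "c l = of_nat (n choose l) / 2 ^ n * exp (- \<i> * of_real (of_int (2 * int l - int n) * m))" for l
  have e: "G x * of_real (cos (x - m) ^ n) =
     (\<Sum>l\<le>n. c l * (G x * exp (\<i> * of_real (of_int (2 * int l - int n) * x))))" for x
  proof -
    have "G x * of_real (cos (x - m) ^ n) =
      (\<Sum>l\<le>n. G x * (of_nat (n choose l) / 2 ^ n * exp (\<i> * of_real (of_int (2 * int l - int n) * (x - m)))))"
      by (simp only: cos_pow_expand sum_distrib_left)
    also have "\<dots> = (\<Sum>l\<le>n. c l * (G x * exp (\<i> * of_real (of_int (2 * int l - int n) * x))))"
    proof (intro sum.cong refl)
      fix l
      have "exp (\<i> * of_real (of_int (2 * int l - int n) * (x - m))) =
        exp (\<i> * of_real (of_int (2 * int l - int n) * x)) * exp (- \<i> * of_real (of_int (2 * int l - int n) * m))"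
        by (simp add: exp_add[symmetric] algebra_simps)
      then show "G x * (of_nat (n choose l) / 2 ^ n * exp (\<i> * of_real (of_int (2 * int l - int n) * (x - m))))
        = c l * (G x * exp (\<i> * of_real (of_int (2 * int l - int n) * x)))"
        by (simp add: c_def)
    qed
    finally show ?thesis .
  qed
  have ii: "integrable lborel (\<lambda>x. G x * exp (\<i> * of_real (of_int k * x)))" for k :: int
  proof (rule integrable_mult_bdd[OF int, where B=1])
    show "(\<lambda>x. exp (\<i> * complex_of_real (real_of_int k * x))) \<in> borel_measurable borel"
      by (intro borel_measurable_continuous_onI continuous_intros)
    show "norm (exp (\<i> * complex_of_real (real_of_int k * x))) \<le> 1" for x
      by (simp only: norm_exp_i_times order_refl)
  qed
  have "(\<integral>x. G x * of_real (cos (x - m) ^ n) \<partial>lborel) =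
      (\<integral>x. (\<Sum>l\<le>n. c l * (G x * exp (\<i> * of_real (of_int (2 * int l - int n) * x)))) \<partial>lborel)"
    by (simp only: e)
  also have "\<dots> = (\<Sum>l\<le>n. (\<integral>x. c l * (G x * exp (\<i> * of_real (of_int (2 * int l - int n) * x))) \<partial>lborel))"
    apply (rule Bochner_Integration.integral_sum[where f="\<lambda>l x. c l * (G x * exp (\<i> * of_real (of_int (2 * int l - int n) * x)))"])
    apply (rule integrable_mult_right)
    apply (rule ii)
    done
  also have "\<dots> = (\<Sum>l\<le>n. c l * (\<integral>x. G x * exp (\<i> * of_real (of_int (2 * int l - int n) * x)) \<partial>lborel))"
    by (simp only: integral_mult_right_zero)
  also have "\<dots> = 0" by (simp only: hz mult_zero_right sum.neutral_const)
  finally show ?thesis .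
qed


lemma small_zero:
  fixes z :: complex and K :: real
  assumes K0: "K \<ge> 0" and b: "\<And>e. e > 0 \<Longrightarrow> norm z \<le> e * K"
  shows "z = 0"
proof (rule ccontr)
  assume "z \<noteq> 0"
  then have n0: "norm z > 0" by simp
  define e where "e = norm z / (2 * (K + 1))"
  have Kp: "2 * (K + 1) > 0" using K0 by simp
  have "e > 0" unfolding e_def using n0 Kp by (intro divide_pos_pos)
  have "e * K \<le> e * (K + 1) " using \<open>e > 0\<close> by simp
  also have "\<dots> = norm z / 2" using Kp by (simp add: e_def field_simps)
  finally have h: "e * K \<le> norm z / 2" .
  have "e * K < norm z" using h n0 by arith
  with b[OF \<open>e > 0\<close>] show False by simp
qed

lemma cont_moment:
  fixes G :: "real \<Rightarrow> complex" and \<phi> :: "real \<Rightarrow> real"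
  assumes int: "integrable lborel G"
    and hz: "\<And>j::int. (\<integral>x. G x * exp (\<i> * of_real (of_int j * x)) \<partial>lborel) = 0"
    and cphi: "continuous_on UNIV \<phi>"
  shows "(\<integral>x. G x * of_real (\<phi> (cos (x - m))) \<partial>lborel) = 0"
proof -
  have [measurable]: "G \<in> borel_measurable borel" using int by auto
  have [measurable]: "\<phi> \<in> borel_measurable borel"
    using cphi by (rule borel_measurable_continuous_onI)
  let ?I = "(\<integral>x. G x * of_real (\<phi> (cos (x - m))) \<partial>lborel)"
  let ?K = "(\<integral>x. norm (G x) \<partial>lborel)"
  have bnd: "norm ?I \<le> e * ?K" if e: "e > 0" for e
  proof -
    have "continuous_on {-1..1} \<phi>" using cphi by (rule continuous_on_subset) auto
    then obtain p where p: "real_polynomial_function p" and pe: "\<And>y. y \<in> {-1..1} \<Longrightarrow> \<bar>\<phi> y - p y\<bar> < e"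
      using Stone_Weierstrass_real_polynomial_function[of "{-1..1::real}" \<phi> e] e by auto
    obtain a N where pa: "p = (\<lambda>y. \<Sum>i\<le>N. a i * y ^ i)"
      using p real_polynomial_function_iff_sum by blast
    have [measurable]: "p \<in> borel_measurable borel" unfolding pa by measurable
    have ii: "integrable lborel (\<lambda>x. G x * of_real (cos (x - m) ^ i))" for i
    proof (rule integrable_mult_bdd[OF int, where B=1])
      show "(\<lambda>x. complex_of_real (cos (x - m) ^ i)) \<in> borel_measurable borel" by measurable
      show "norm (complex_of_real (cos (x - m) ^ i)) \<le> 1" for x
        by (simp only: norm_of_real power_abs) (intro power_le_one abs_ge_zero abs_cos_le_one)
    qed
    have pz: "(\<integral>x. G x * of_real (p (cos (x - m))) \<partial>lborel) = 0"
    proof -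
      have "(\<integral>x. G x * of_real (p (cos (x - m))) \<partial>lborel) =
          (\<integral>x. (\<Sum>i\<le>N. of_real (a i) * (G x * of_real (cos (x - m) ^ i))) \<partial>lborel)"
        unfolding pa by (intro Bochner_Integration.integral_cong refl) (simp add: sum_distrib_left algebra_simps)
      also have "\<dots> = (\<Sum>i\<le>N. (\<integral>x. of_real (a i) * (G x * of_real (cos (x - m) ^ i)) \<partial>lborel))"
        apply (rule Bochner_Integration.integral_sum[where f="\<lambda>i x. of_real (a i) * (G x * of_real (cos (x - m) ^ i))"])
        apply (rule integrable_mult_right)
        apply (rule ii)
        done
      also have "\<dots> = (\<Sum>i\<le>N. of_real (a i) * (\<integral>x. G x * of_real (cos (x - m) ^ i) \<partial>lborel))"
        by (simp only: integral_mult_right_zero)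
      also have "\<dots> = 0" using trig_moment[OF int hz] by simp
      finally show ?thesis .
    qed
    have cp: "continuous_on UNIV p" unfolding pa by (intro continuous_intros)
    have bd: "\<exists>B. \<forall>y\<in>{-1..1}. \<bar>f y\<bar> \<le> B" if "continuous_on UNIV f" for f :: "real \<Rightarrow> real"
    proof -
      have "bounded (f ` {-1..1})"
        by (intro compact_imp_bounded compact_continuous_image continuous_on_subset[OF that]) auto
      then show ?thesis by (auto simp: bounded_real)
    qed
    have intc: "integrable lborel (\<lambda>x. G x * of_real (f (cos (x - m))))"
      if cf: "continuous_on UNIV f" for f :: "real \<Rightarrow> real"
    proof -
      obtain B where B: "\<And>y. y \<in> {-1..1} \<Longrightarrow> \<bar>f y\<bar> \<le> B" using bd[OF cf] by blast
      have [measurable]: "f \<in> borel_measurable borel" using cf by (rule borel_measurable_continuous_onI)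
      show ?thesis
      proof (rule integrable_mult_bdd[OF int, where B=B])
        show "(\<lambda>x. complex_of_real (f (cos (x - m)))) \<in> borel_measurable borel" by measurable
        show "norm (complex_of_real (f (cos (x - m)))) \<le> B" for x
          using B[of "cos (x - m)"] by simp
      qed
    qed
    have i1: "integrable lborel (\<lambda>x. G x * of_real (\<phi> (cos (x - m))))" by (rule intc[OF cphi])
    have i2: "integrable lborel (\<lambda>x. G x * of_real (p (cos (x - m))))" by (rule intc[OF cp])
    have "?I = (\<integral>x. G x * of_real (\<phi> (cos (x - m))) - G x * of_real (p (cos (x - m))) \<partial>lborel)"
      using i1 i2 pz by simp
    also have "norm \<dots> \<le> (\<integral>x. norm (G x * of_real (\<phi> (cos (x - m))) - G x * of_real (p (cos (x - m)))) \<partial>lborel)"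
      by (rule integral_norm_bound)
    also have "\<dots> \<le> (\<integral>x. e * norm (G x) \<partial>lborel)"
    proof (rule integral_mono)
      show "integrable lborel (\<lambda>x. norm (G x * of_real (\<phi> (cos (x - m))) - G x * of_real (p (cos (x - m)))))"
        using i1 i2 by auto
      show "integrable lborel (\<lambda>x. e * norm (G x))" using int by auto
      fix x
      have "norm (G x * of_real (\<phi> (cos (x - m))) - G x * of_real (p (cos (x - m))))
          = norm (G x) * \<bar>\<phi> (cos (x - m)) - p (cos (x - m))\<bar>"
        by (simp add: right_diff_distrib[symmetric] norm_mult del: of_real_diff add: of_real_diff[symmetric])
      also have "\<dots> \<le> norm (G x) * e"
        using pe[of "cos (x - m)"] by (intro mult_left_mono) auto
      finally show "norm (G x * of_real (\<phi> (cos (x - m))) - G x * of_real (p (cos (x - m)))) \<le> e * norm (G x)"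
        by (simp add: mult.commute)
    qed
    also have "\<dots> = e * ?K" by simp
    finally show ?thesis .
  qed
  have K0: "?K \<ge> 0" by (intro Bochner_Integration.integral_nonneg) auto
  show ?thesis by (rule small_zero[OF K0 bnd])
qed


lemma AE_zero_from_Ioi:
  fixes f :: "real \<Rightarrow> real"
  assumes int: "integrable lborel f"
    and z: "\<And>a. (\<integral>x. f x * indicator {a<..} x \<partial>lborel) = 0"
  shows "AE x in lborel. f x = 0"
proof -
  define fp where "fp x = max 0 (f x)" for x
  define fn where "fn x = max 0 (- f x)" for x
  have [measurable]: "f \<in> borel_measurable lborel" using int by auto
  have ip: "integrable lborel fp" unfolding fp_def using int by auto
  have in_: "integrable lborel fn" unfolding fn_def using int by auto
  have [measurable]: "fp \<in> borel_measurable borel" "fn \<in> borel_measurable borel"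
    using ip in_ by auto
  have ipA: "integrable lborel (\<lambda>x. fp x * indicator A x)" if "A \<in> sets borel" for A
    using integrable_mult_indicator[of A lborel fp] ip that by (simp add: mult.commute)
  have inA: "integrable lborel (\<lambda>x. fn x * indicator A x)" if "A \<in> sets borel" for A
    using integrable_mult_indicator[of A lborel fn] in_ that by (simp add: mult.commute)
  have emp: "emeasure (density lborel fp) A = ennreal (\<integral>x. fp x * indicator A x \<partial>lborel)"
    if A: "A \<in> sets borel" for A
  proof -
    have "emeasure (density lborel fp) A = (\<integral>\<^sup>+x. ennreal (fp x * indicator A x) \<partial>lborel)"
      using A by (subst emeasure_density) (auto intro!: nn_integral_cong simp: indicator_def)
    also have "\<dots> = ennreal (\<integral>x. fp x * indicator A x \<partial>lborel)"
      using ipA[OF A] by (intro nn_integral_eq_integral) (auto simp: fp_def indicator_def)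
    finally show ?thesis .
  qed
  have emn: "emeasure (density lborel fn) A = ennreal (\<integral>x. fn x * indicator A x \<partial>lborel)"
    if A: "A \<in> sets borel" for A
  proof -
    have "emeasure (density lborel fn) A = (\<integral>\<^sup>+x. ennreal (fn x * indicator A x) \<partial>lborel)"
      using A by (subst emeasure_density) (auto intro!: nn_integral_cong simp: indicator_def)
    also have "\<dots> = ennreal (\<integral>x. fn x * indicator A x \<partial>lborel)"
      using inA[OF A] by (intro nn_integral_eq_integral) (auto simp: fn_def indicator_def)
    finally show ?thesis .
  qed
  have diff: "(\<integral>x. fp x * indicator A x \<partial>lborel) - (\<integral>x. fn x * indicator A x \<partial>lborel)
      = (\<integral>x. f x * indicator A x \<partial>lborel)" if A: "A \<in> sets borel" for A
  proof -
    have "(\<integral>x. fp x * indicator A x \<partial>lborel) - (\<integral>x. fn x * indicator A x \<partial>lborel)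
       = (\<integral>x. fp x * indicator A x - fn x * indicator A x \<partial>lborel)"
      using ipA[OF A] inA[OF A] by simp
    also have "\<dots> = (\<integral>x. f x * indicator A x \<partial>lborel)"
      by (intro Bochner_Integration.integral_cong) (auto simp: fp_def fn_def max_def algebra_simps)
    finally show ?thesis .
  qed
  have MN: "density lborel fp = density lborel fn"
  proof (rule measure_eqI_lessThan)
    show "sets (density lborel fp) = sets borel" "sets (density lborel fn) = sets borel" by auto
    fix x
    show "emeasure (density lborel fp) {x<..} < \<infinity>" using emp[of "{x<..}"] by simp
    show "emeasure (density lborel fp) {x<..} = emeasure (density lborel fn) {x<..}"
      using emp[of "{x<..}"] emn[of "{x<..}"] diff[of "{x<..}"] z[of x] by simp
  qed
  have "AE x in lborel. fp x = fn x"
  proof (rule density_unique_real[OF ip in_])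
    fix A :: "real set" assume A: "A \<in> sets lborel"
    have A': "A \<in> sets borel" using A by simp
    have "ennreal (\<integral>x. fp x * indicator A x \<partial>lborel) = ennreal (\<integral>x. fn x * indicator A x \<partial>lborel)"
      using emp[OF A'] emn[OF A'] MN by simp
    moreover have "0 \<le> (\<integral>x. fp x * indicator A x \<partial>lborel)" "0 \<le> (\<integral>x. fn x * indicator A x \<partial>lborel)"
      by (auto intro!: Bochner_Integration.integral_nonneg simp: fp_def fn_def)
    ultimately have "(\<integral>x. fp x * indicator A x \<partial>lborel) = (\<integral>x. fn x * indicator A x \<partial>lborel)"
      by simp
    then show "(\<integral>x \<in> A. fp x \<partial>lborel) = (\<integral>x \<in> A. fn x \<partial>lborel)"
      by (simp add: set_lebesgue_integral_def mult.commute)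
  qed
  then show ?thesis
    by eventually_elim (auto simp: fp_def fn_def max_def split: if_splits)
qed


lemma arc_char:
  assumes a: "0 \<le> a" "a < 2*pi" and x: "0 \<le> x" "x \<le> 2*pi"
  shows "cos (x - (pi + a/2)) > cos (pi - a/2) \<longleftrightarrow> (a < x \<and> x < 2*pi)"
proof -
  define y where "y = x - (pi + a/2)"
  define r where "r = pi - a/2"
  have r: "0 < r" "r \<le> pi" using a unfolding r_def by auto
  have y: "r - 2*pi \<le> y" "y \<le> r" using x unfolding y_def r_def by auto
  have eq: "(a < x \<and> x < 2*pi) \<longleftrightarrow> (-r < y \<and> y < r)" unfolding y_def r_def by auto
  show ?thesis unfolding y_def[symmetric] r_def[symmetric] eq
  proof (cases "y \<ge> 0")
    case True
    then show "cos r < cos y \<longleftrightarrow> (- r < y \<and> y < r)"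
      using cos_mono_less_eq[of r y] r y by auto
  next
    case False
    show "cos r < cos y \<longleftrightarrow> (- r < y \<and> y < r)"
    proof (cases "y \<ge> -pi")
      case True
      then show ?thesis using cos_mono_less_eq[of r "-y"] r y False by auto
    next
      case F2: False
      have "cos y = cos (y + 2*pi)" by (rule cos_periodic[symmetric])
      also have "\<dots> \<le> cos r" using cos_mono_le_eq[of "y + 2*pi" r] r y F2 by auto
      finally show ?thesis using F2 r by auto
    qed
  qed
qed

lemma ind_moment:
  fixes G :: "real \<Rightarrow> complex"
  assumes int: "integrable lborel G"
    and hz: "\<And>j::int. (\<integral>x. G x * exp (\<i> * of_real (of_int j * x)) \<partial>lborel) = 0"
    and supp: "\<And>x. x \<notin> {0..2*pi} \<Longrightarrow> G x = 0"
    and a: "0 \<le> a" "a < 2*pi"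
  shows "(\<integral>x. G x * indicator {a<..<2*pi} x \<partial>lborel) = 0"
proof -
  define m where "m = pi + a/2"
  define c where "c = cos (pi - a/2)"
  define \<phi> where "\<phi> n y = max 0 (min 1 (real n * (y - c)))" for n :: nat and y
  have [measurable]: "G \<in> borel_measurable borel" using int by auto
  have cphi: "continuous_on UNIV (\<phi> n)" for n unfolding \<phi>_def by (intro continuous_intros)
  have z: "(\<integral>x. G x * of_real (\<phi> n (cos (x - m))) \<partial>lborel) = 0" for n
    by (rule cont_moment[OF int hz cphi])
  have lim: "(\<lambda>n. G x * of_real (\<phi> n (cos (x - m)))) \<longlonglongrightarrow> G x * indicator {a<..<2*pi} x" for x
  proof (cases "x \<in> {0..2*pi}")
    case False
    then show ?thesis using supp[OF False] by simp
  next
    case True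
    then have x: "0 \<le> x" "x \<le> 2*pi" by auto
    show ?thesis
    proof (cases "cos (x - m) > c")
      case True
      then have ind: "x \<in> {a<..<2*pi}" using arc_char[OF a x] unfolding m_def c_def by auto
      define d where "d = cos (x - m) - c"
      have d: "d > 0" using True unfolding d_def by simp
      obtain N :: nat where N: "1 / d < N" using reals_Archimedean2 by blast
      have "eventually (\<lambda>n. G x * of_real (\<phi> n (cos (x - m))) = G x * indicator {a<..<2*pi} x) sequentially"
        unfolding eventually_sequentially
      proof (intro exI allI impI)
        fix n assume "N \<le> n"
        then have "1 / d < real n" using N by linarith
        then have "1 \<le> real n * d" using d by (simp add: field_simps)
        then have "\<phi> n (cos (x - m)) = 1" unfolding \<phi>_def d_def by simp
        then show "G x * of_real (\<phi> n (cos (x - m))) = G x * indicator {a<..<2*pi} x"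
          using ind by simp
      qed
      then show ?thesis by (rule tendsto_eventually)
    next
      case False
      then have ind: "x \<notin> {a<..<2*pi}" using arc_char[OF a x] unfolding m_def c_def by auto
      have "\<phi> n (cos (x - m)) = 0" for n
      proof -
        have "real n * (cos (x - m) - c) \<le> 0" using False by (intro mult_nonneg_nonpos) auto
        then show ?thesis unfolding \<phi>_def by (simp add: min_def max_def)
      qed
      then show ?thesis using ind by simp
    qed
  qed
  have "(\<lambda>n. (\<integral>x. G x * of_real (\<phi> n (cos (x - m))) \<partial>lborel)) \<longlonglongrightarrow> (\<integral>x. G x * indicator {a<..<2*pi} x \<partial>lborel)"
  proof (rule integral_dominated_convergence[where w="\<lambda>x. norm (G x)"])
    show "(\<lambda>x. G x * indicator {a<..<2*pi} x) \<in> borel_measurable lborel" by measurable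
    show "(\<lambda>x. G x * of_real (\<phi> n (cos (x - m)))) \<in> borel_measurable lborel" for n
      unfolding \<phi>_def by measurable
    show "integrable lborel (\<lambda>x. norm (G x))" using int by auto
    show "AE x in lborel. (\<lambda>n. G x * of_real (\<phi> n (cos (x - m)))) \<longlonglongrightarrow> G x * indicator {a<..<2*pi} x"
      using lim by simp
    show "AE x in lborel. norm (G x * of_real (\<phi> n (cos (x - m)))) \<le> norm (G x)" for n
    proof (rule AE_I2)
      fix x
      have "\<bar>\<phi> n (cos (x - m))\<bar> \<le> 1" unfolding \<phi>_def by auto
      then have "norm (G x) * \<bar>\<phi> n (cos (x - m))\<bar> \<le> norm (G x) * 1" by (intro mult_left_mono) auto
      then show "norm (G x * of_real (\<phi> n (cos (x - m)))) \<le> norm (G x)" by (simp add: norm_mult)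
    qed
  qed
  then show ?thesis using z by (simp add: LIMSEQ_const_iff)
qed

lemma fourier_unique:
  fixes G :: "real \<Rightarrow> complex"
  assumes int: "integrable lborel G"
    and hz: "\<And>j::int. (\<integral>x. G x * exp (\<i> * of_real (of_int j * x)) \<partial>lborel) = 0"
    and supp: "\<And>x. x \<notin> {0..2*pi} \<Longrightarrow> G x = 0"
  shows "AE x in lborel. G x = 0"
proof -
  have [measurable]: "G \<in> borel_measurable borel" using int by auto
  have iI: "integrable lborel (\<lambda>x. G x * indicator A x)" if [measurable]: "A \<in> sets borel" for A
    by (rule integrable_mult_bdd[OF int, where B=1]) (auto simp: indicator_def)
  have zI: "(\<integral>x. G x * indicator {a<..} x \<partial>lborel) = 0" for a
  proof (cases "a < 0")
    case True
    have "(\<integral>x. G x * indicator {a<..} x \<partial>lborel) = (\<integral>x. G x * exp (\<i> * of_real (of_int 0 * x)) \<partial>lborel)"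
    proof (intro Bochner_Integration.integral_cong refl)
      fix x show "G x * indicator {a<..} x = G x * exp (\<i> * of_real (of_int 0 * x))"
        using supp[of x] True by (cases "a < x") auto
    qed
    then show ?thesis using hz[of 0] by simp
  next
    case False
    show ?thesis
    proof (cases "a < 2*pi")
      case True
      have "(\<integral>x. G x * indicator {a<..} x \<partial>lborel) = (\<integral>x. G x * indicator {a<..<2*pi} x \<partial>lborel)"
      proof (rule integral_cong_AE)
        show "(\<lambda>x. G x * indicator {a<..} x) \<in> borel_measurable lborel" by measurable
        show "(\<lambda>x. G x * indicator {a<..<2*pi} x) \<in> borel_measurable lborel" by measurable
        show "AE x in lborel. G x * indicator {a<..} x = G x * indicator {a<..<2*pi} x"
          using AE_lborel_singleton[of "2*pi"]
        proof eventually_elim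
          case (elim x)
          then show ?case using supp[of x] by (cases "x < 2*pi") (auto simp: indicator_def)
        qed
      qed
      then show ?thesis using ind_moment[OF int hz supp _ True] False by simp
    next
      case F2: False
      have "(\<lambda>x. G x * indicator {a<..} x) = (\<lambda>x. 0)"
      proof
        fix x show "G x * indicator {a<..} x = 0"
          using supp[of x] F2 by (cases "a < x") auto
      qed
      then show ?thesis by simp
    qed
  qed
  have re: "AE x in lborel. Re (G x) = 0"
  proof (rule AE_zero_from_Ioi)
    show "integrable lborel (\<lambda>x. Re (G x))" using int by auto
    fix a
    have "(\<integral>x. Re (G x) * indicator {a<..} x \<partial>lborel) = (\<integral>x. Re (G x * indicator {a<..} x) \<partial>lborel)"
      by (intro Bochner_Integration.integral_cong refl) (auto simp: indicator_def)
    also have "\<dots> = Re (\<integral>x. G x * indicator {a<..} x \<partial>lborel)"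
      by (rule integral_Re[OF iI]) simp
    also have "\<dots> = 0" using zI by simp
    finally show "(\<integral>x. Re (G x) * indicator {a<..} x \<partial>lborel) = 0" .
  qed
  have im: "AE x in lborel. Im (G x) = 0"
  proof (rule AE_zero_from_Ioi)
    show "integrable lborel (\<lambda>x. Im (G x))" using int by auto
    fix a
    have "(\<integral>x. Im (G x) * indicator {a<..} x \<partial>lborel) = (\<integral>x. Im (G x * indicator {a<..} x) \<partial>lborel)"
      by (intro Bochner_Integration.integral_cong refl) (auto simp: indicator_def)
    also have "\<dots> = Im (\<integral>x. G x * indicator {a<..} x \<partial>lborel)"
      by (rule integral_Im[OF iI]) simp
    also have "\<dots> = 0" using zI by simp
    finally show "(\<integral>x. Im (G x) * indicator {a<..} x \<partial>lborel) = 0" .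
  qed
  from re im show ?thesis by eventually_elim (simp add: complex_eq_iff)
qed


lemma Icc_Ico_integral:
  fixes F :: "real \<Rightarrow> complex"
  assumes [measurable]: "F \<in> borel_measurable borel"
  shows "integrable lborel (\<lambda>x. indicator {a..b} x *\<^sub>R F x) \<longleftrightarrow> integrable lborel (\<lambda>x. indicator {a..<b} x *\<^sub>R F x)"
    and "(\<integral>x. indicator {a..b} x *\<^sub>R F x \<partial>lborel) = (\<integral>x. indicator {a..<b} x *\<^sub>R F x \<partial>lborel)"
proof -
  have ae: "AE x in lborel. indicator {a..b} x *\<^sub>R F x = indicator {a..<b} x *\<^sub>R F x"
    using AE_lborel_singleton[of b] by eventually_elim (auto simp: indicator_def)
  show "integrable lborel (\<lambda>x. indicator {a..b} x *\<^sub>R F x) \<longleftrightarrow> integrable lborel (\<lambda>x. indicator {a..<b} x *\<^sub>R F x)"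
    by (rule integrable_cong_AE) (use ae in auto)
  show "(\<integral>x. indicator {a..b} x *\<^sub>R F x \<partial>lborel) = (\<integral>x. indicator {a..<b} x *\<^sub>R F x \<partial>lborel)"
    by (rule integral_cong_AE) (use ae in auto)
qed

lemma shift_affine:
  fixes F :: "real \<Rightarrow> complex"
  shows "integrable lborel (\<lambda>x. indicator {a..<b} x *\<^sub>R F (x + t)) \<longleftrightarrow> integrable lborel (\<lambda>y. indicator {a+t..<b+t} y *\<^sub>R F y)"
    and "(\<integral>x. indicator {a..<b} x *\<^sub>R F (x + t) \<partial>lborel) = (\<integral>y. indicator {a+t..<b+t} y *\<^sub>R F y \<partial>lborel)"
proof -
  let ?f = "\<lambda>y. indicator {a+t..<b+t} y *\<^sub>R F y"
  have e: "(\<lambda>x. ?f (t + 1 * x)) = (\<lambda>x. indicator {a..<b} x *\<^sub>R F (x + t))"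
    by (auto simp: indicator_def add.commute)
  show "integrable lborel (\<lambda>x. indicator {a..<b} x *\<^sub>R F (x + t)) \<longleftrightarrow> integrable lborel ?f"
    using lborel_integrable_real_affine_iff[of 1 ?f t] e by simp
  show "(\<integral>x. indicator {a..<b} x *\<^sub>R F (x + t) \<partial>lborel) = (\<integral>y. ?f y \<partial>lborel)"
    using lborel_integral_real_affine[of 1 ?f t] e by simp
qed

lemma periodic_shift_Ico:
  fixes F :: "real \<Rightarrow> complex"
  assumes per: "\<And>x. F (x + 2*pi) = F x"
    and [measurable]: "F \<in> borel_measurable borel"
    and int: "integrable lborel (\<lambda>x. indicator {0..<2*pi} x *\<^sub>R F x)"
    and d: "0 \<le> d" "d < 2*pi"
  shows "integrable lborel (\<lambda>x. indicator {0..<2*pi} x *\<^sub>R F (x + d))"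
    and "(\<integral>x. indicator {0..<2*pi} x *\<^sub>R F (x + d) \<partial>lborel) = (\<integral>x. indicator {0..<2*pi} x *\<^sub>R F x \<partial>lborel)"
proof -
  have iA: "integrable lborel (\<lambda>x. indicator A x *\<^sub>R F x)" if "A \<in> sets borel" "A \<subseteq> {0..<2*pi}" for A
  proof -
    have "integrable lborel (\<lambda>x. indicator A x *\<^sub>R (indicator {0..<2*pi} x *\<^sub>R F x))"
      using that by (intro integrable_mult_indicator int) auto
    moreover have "(\<lambda>x. indicator A x *\<^sub>R (indicator {0..<2*pi} x *\<^sub>R F x)) = (\<lambda>x. indicator A x *\<^sub>R F x)"
      using that by (intro ext) (auto simp: indicator_def)
    ultimately show ?thesis by simp
  qed
  have i1: "integrable lborel (\<lambda>x. indicator {d..<2*pi} x *\<^sub>R F x)" using d by (intro iA) auto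
  have i2': "integrable lborel (\<lambda>x. indicator {0..<d} x *\<^sub>R F x)" using d by (intro iA) auto
  have e2: "(\<lambda>x. indicator {0..<d} x *\<^sub>R F (x + 2*pi)) = (\<lambda>x. indicator {0..<d} x *\<^sub>R F x)"
    using per by auto
  have i2: "integrable lborel (\<lambda>y. indicator {2*pi..<2*pi+d} y *\<^sub>R F y)"
    using shift_affine(1)[of 0 d F "2*pi"] i2' e2 by (simp add: add.commute)
  have I2: "(\<integral>y. indicator {2*pi..<2*pi+d} y *\<^sub>R F y \<partial>lborel) = (\<integral>x. indicator {0..<d} x *\<^sub>R F x \<partial>lborel)"
    using shift_affine(2)[of 0 d F "2*pi"] e2 by (simp add: add.commute)
  have split: "indicator {d..<2*pi+d} y *\<^sub>R F y = indicator {d..<2*pi} y *\<^sub>R F y + indicator {2*pi..<2*pi+d} y *\<^sub>R F y" for y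
    using d by (auto simp: indicator_def)
  have split2: "indicator {0..<2*pi} y *\<^sub>R F y = indicator {0..<d} y *\<^sub>R F y + indicator {d..<2*pi} y *\<^sub>R F y" for y
    using d by (auto simp: indicator_def)
  have iS: "integrable lborel (\<lambda>y. indicator {d..<2*pi+d} y *\<^sub>R F y)"
    unfolding split using i1 i2 by simp
  show "integrable lborel (\<lambda>x. indicator {0..<2*pi} x *\<^sub>R F (x + d))"
    using shift_affine(1)[of 0 "2*pi" F d] iS by (simp add: add.commute)
  have "(\<integral>x. indicator {0..<2*pi} x *\<^sub>R F (x + d) \<partial>lborel) = (\<integral>y. indicator {d..<2*pi+d} y *\<^sub>R F y \<partial>lborel)"
    using shift_affine(2)[of 0 "2*pi" F d] by (simp add: add.commute)
  also have "\<dots> = (\<integral>y. indicator {d..<2*pi} y *\<^sub>R F y \<partial>lborel) + (\<integral>y. indicator {2*pi..<2*pi+d} y *\<^sub>R F y \<partial>lborel)"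
    unfolding split using i1 i2 by simp
  also have "\<dots> = (\<integral>y. indicator {0..<d} y *\<^sub>R F y \<partial>lborel) + (\<integral>y. indicator {d..<2*pi} y *\<^sub>R F y \<partial>lborel)"
    using I2 by simp
  also have "\<dots> = (\<integral>x. indicator {0..<2*pi} x *\<^sub>R F x \<partial>lborel)"
    unfolding split2 using i1 i2' by simp
  finally show "(\<integral>x. indicator {0..<2*pi} x *\<^sub>R F (x + d) \<partial>lborel) = (\<integral>x. indicator {0..<2*pi} x *\<^sub>R F x \<partial>lborel)" .
qed

lemma periodic_shift:
  fixes F :: "real \<Rightarrow> complex"
  assumes per: "\<And>x (k::int). F (x + 2*pi*k) = F x"
    and [measurable]: "F \<in> borel_measurable borel"
    and int: "set_integrable lborel {0..2*pi} F"
  shows "set_integrable lborel {0..2*pi} (\<lambda>x. F (x + c))"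
    and "(LINT x:{0..2*pi}|lborel. F (x + c)) = (LINT x:{0..2*pi}|lborel. F x)"
proof -
  define n where "n = \<lfloor>c / (2*pi)\<rfloor>"
  define d where "d = c - 2*pi*n"
  have d: "0 \<le> d" "d < 2*pi"
  proof -
    have "real_of_int n \<le> c / (2*pi)" "c / (2*pi) < real_of_int n + 1" unfolding n_def by linarith+
    then show "0 \<le> d" "d < 2*pi" unfolding d_def by (auto simp: field_simps)
  qed
  have Fc: "F (x + c) = F (x + d)" for x
    using per[of "x + d" n] unfolding d_def by (simp add: algebra_simps)
  have per1: "F (x + 2*pi) = F x" for x using per[of x 1] by simp
  have [measurable]: "(\<lambda>x. F (x + d)) \<in> borel_measurable borel" by measurable
  have int': "integrable lborel (\<lambda>x. indicator {0..<2*pi} x *\<^sub>R F x)"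
    using int Icc_Ico_integral(1)[of F 0 "2*pi"] unfolding set_integrable_def by simp
  note P = periodic_shift_Ico[OF per1 _ int' d]
  show "set_integrable lborel {0..2*pi} (\<lambda>x. F (x + c))"
    unfolding set_integrable_def Fc using P(1) Icc_Ico_integral(1)[of "\<lambda>x. F (x + d)" 0 "2*pi"] by simp
  show "(LINT x:{0..2*pi}|lborel. F (x + c)) = (LINT x:{0..2*pi}|lborel. F x)"
    unfolding set_lebesgue_integral_def Fc
    using P(2) Icc_Ico_integral(2)[of "\<lambda>x. F (x + d)" 0 "2*pi"] Icc_Ico_integral(2)[of F 0 "2*pi"] by simp
qed


lemma exp_int_2pi: "exp (\<i> * of_real (of_int k * (2*pi))) = 1"
  using exp_2pi_1_int[of k] by (simp add: mult.commute mult.left_commute)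

lemma setint_cont:
  fixes f :: "real \<Rightarrow> complex"
  assumes "continuous_on {a..b} f"
  shows "set_integrable lborel {a..b} f"
  unfolding set_integrable_def by (rule borel_integrable_compact) (auto simp: assms)

lemma exp_int_integral:
  "(LINT x:{0..2*pi}|lborel. exp (\<i> * of_real (of_int k * x))) = (if k = 0 then 2*pi else 0)"
proof -
  have si: "set_integrable lborel {0..2*pi} (\<lambda>x. exp (\<i> * of_real (of_int k * x)))"
    by (intro setint_cont continuous_intros)
  have "(LINT x:{0..2*pi}|lborel. exp (\<i> * of_real (of_int k * x))) = integral {0..2*pi} (\<lambda>x. exp (\<i> * of_real (of_int k * x)))"
    by (rule set_borel_integral_eq_integral(2)[OF si])
  also have "\<dots> = (if k = 0 then 2*pi else 0)"
  proof (cases "k = 0")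
    case True then show ?thesis by (simp add: scaleR_conv_of_real)
  next
    case False
    have "integral {0..2*pi} (\<lambda>x. exp (\<i> * of_real (of_int k * x))) = integral {0..2*pi} (\<lambda>x. exp ((\<i> * of_int k) * of_real x))"
      by (simp add: mult.assoc)
    also have "\<dots> = (exp ((\<i> * of_int k) * of_real (2*pi)) - 1) / (\<i> * of_int k)"
      using False by (intro integral_exp) auto
    also have "exp ((\<i> * of_int k) * of_real (2*pi)) = 1"
      using exp_int_2pi[of k] by (simp add: mult.assoc)
    finally show ?thesis using False by simp
  qed
  finally show ?thesis .
qed

lemma phi_mult_cnj:
  "phi \<theta> l x * cnj (phi \<theta> j x) = exp (\<i> * of_real (of_int (l - j) * x)) / (2 * pi)"
proof -
  have s: "complex_of_real (sqrt (2 * pi)) * complex_of_real (sqrt (2 * pi)) = 2 * pi"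
    by (simp flip: of_real_mult)
  have "phi \<theta> l x * cnj (phi \<theta> j x) =
     exp (\<i> * complex_of_real ((real_of_int l + \<theta>) * x)) * exp (- (\<i> * complex_of_real ((real_of_int j + \<theta>) * x)))
       / (complex_of_real (sqrt (2 * pi)) * complex_of_real (sqrt (2 * pi)))"
    unfolding phi_def by (simp add: exp_cnj)
  also have "exp (\<i> * complex_of_real ((real_of_int l + \<theta>) * x)) * exp (- (\<i> * complex_of_real ((real_of_int j + \<theta>) * x)))
      = exp (\<i> * of_real (of_int (l - j) * x))"
    by (simp add: exp_add[symmetric] algebra_simps)
  finally show ?thesis using s by simp
qed

lemma phi_ortho:
  "(LINT x:{0..2*pi}|lborel. phi \<theta> l x * cnj (phi \<theta> j x)) = (if l = j then 1 else 0)"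
proof -
  have "(LINT x:{0..2*pi}|lborel. phi \<theta> l x * cnj (phi \<theta> j x)) =
      (LINT x:{0..2*pi}|lborel. exp (\<i> * of_real (of_int (l - j) * x))) / (2 * pi)"
    unfolding phi_mult_cnj by (simp add: set_integral_divide_zero)
  also have "\<dots> = (if l = j then 1 else 0)" by (subst exp_int_integral) simp
  finally show ?thesis .
qed


lemma geo_root:
  fixes q :: nat and d :: int
  assumes q: "q > 0"
  shows "(\<Sum>k<q. exp (\<i> * of_real (2 * pi * of_int d / of_nat q)) ^ k) = (if int q dvd d then of_nat q else 0)"
proof -
  define w where "w = exp (\<i> * of_real (2 * pi * of_int d / of_nat q))"
  have wq: "w ^ q = 1"
  proof -
    have "w ^ q = exp (of_nat q * (\<i> * of_real (2 * pi * of_int d / of_nat q)))"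
      unfolding w_def by (simp only: exp_of_nat_mult)
    also have "of_nat q * (\<i> * of_real (2 * pi * of_int d / of_nat q)) = \<i> * (of_int d * (of_real pi * 2))"
      using q by (simp add: field_simps)
    finally show ?thesis by simp
  qed
  have w1: "w = 1 \<longleftrightarrow> int q dvd d"
  proof
    assume "w = 1"
    then obtain n :: int where n: "2 * pi * of_int d / of_nat q = 2 * pi * of_int n"
      unfolding w_def exp_eq_1 by auto
    then have "of_int d = of_int n * (of_nat q :: real)" using q by (simp add: field_simps)
    then have "d = n * int q" by (metis of_int_eq_iff of_int_mult of_int_of_nat_eq)
    then show "int q dvd d" by simp
  next
    assume "int q dvd d"
    then obtain n where n: "d = int q * n" by auto
    have "\<i> * of_real (2 * pi * of_int d / of_nat q) = \<i> * (of_int n * (of_real pi * 2))"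
      using q by (simp add: n field_simps)
    then show "w = 1" unfolding w_def by simp
  qed
  show ?thesis
    unfolding w_def[symmetric] using wq w1 by (simp add: sum_gp_strict)
qed

lemma dft_exists:
  fixes g :: "int \<Rightarrow> complex" and q :: nat
  assumes q: "q > 0" and per: "\<And>j. g (j mod int q) = g j"
  shows "\<exists>c. \<forall>j. (\<Sum>k<q. c k * exp (- (\<i> * of_real (2 * pi * of_int j * of_nat k / of_nat q)))) = g j"
proof -
  define c where "c k = (\<Sum>m<q. g (int m) * exp (\<i> * of_real (2 * pi * of_nat m * of_nat k / of_nat q))) / of_nat q" for k
  have "(\<Sum>k<q. c k * exp (- (\<i> * of_real (2 * pi * of_int j * of_nat k / of_nat q)))) = g j" for j
  proof -
    have e: "exp (\<i> * of_real (2 * pi * of_nat m * of_nat k / of_nat q)) * exp (- (\<i> * of_real (2 * pi * of_int j * of_nat k / of_nat q)))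
        = exp (\<i> * of_real (2 * pi * of_int (int m - j) / of_nat q)) ^ k" for m k
    proof -
      have "exp (\<i> * of_real (2 * pi * of_int (int m - j) / of_nat q)) ^ k = exp (of_nat k * (\<i> * of_real (2 * pi * of_int (int m - j) / of_nat q)))"
        by (simp only: exp_of_nat_mult)
      also have "\<dots> = exp (\<i> * of_real (2 * pi * of_nat m * of_nat k / of_nat q) + - (\<i> * of_real (2 * pi * of_int j * of_nat k / of_nat q)))"
        using q by (intro arg_cong[where f=exp]) (simp add: field_simps)
      finally show ?thesis by (simp only: exp_add)
    qed
    have "(\<Sum>k<q. c k * exp (- (\<i> * of_real (2 * pi * of_int j * of_nat k / of_nat q))))
       = (\<Sum>k<q. \<Sum>m<q. g (int m) * (exp (\<i> * of_real (2 * pi * of_nat m * of_nat k / of_nat q)) * exp (- (\<i> * of_real (2 * pi * of_int j * of_nat k / of_nat q)))) / of_nat q)"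
      unfolding c_def by (simp add: sum_divide_distrib sum_distrib_right mult.assoc)
    also have "\<dots> = (\<Sum>m<q. g (int m) * (\<Sum>k<q. exp (\<i> * of_real (2 * pi * of_int (int m - j) / of_nat q)) ^ k) / of_nat q)"
      unfolding e by (subst sum.swap) (simp add: sum_divide_distrib sum_distrib_left)
    also have "\<dots> = (\<Sum>m<q. if m = nat (j mod int q) then g (int m) else 0)"
    proof (intro sum.cong refl)
      fix m assume m: "m \<in> {..<q}"
      have "int q dvd (int m - j) \<longleftrightarrow> m = nat (j mod int q)"
      proof -
        have "int q dvd (int m - j) \<longleftrightarrow> int m mod int q = j mod int q"
          by (simp add: mod_eq_dvd_iff)
        also have "int m mod int q = int m" using m by simp
        also have "int m = j mod int q \<longleftrightarrow> m = nat (j mod int q)"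
          using q by auto
        finally show ?thesis .
      qed
      then have gs: "(\<Sum>k<q. exp (\<i> * of_real (2 * pi * of_int (int m - j) / of_nat q)) ^ k) = (if m = nat (j mod int q) then of_nat q else 0)"
        using geo_root[OF q, of "int m - j"] by simp
      show "g (int m) * (\<Sum>k<q. exp (\<i> * of_real (2 * pi * of_int (int m - j) / of_nat q)) ^ k) / of_nat q
          = (if m = nat (j mod int q) then g (int m) else 0)"
        unfolding gs using q by auto
    qed
    also have "\<dots> = g (int (nat (j mod int q)))"
    proof -
      have "nat (j mod int q) < q" using q by (simp add: nat_less_iff)
      then show ?thesis by (simp add: sum.delta)
    qed
    also have "\<dots> = g j" using q per[of j] by simp
    finally show ?thesis .
  qed
  then show ?thesis by blast
qed


lemma phi_cont: "continuous_on S (phi \<theta> j)"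
  unfolding phi_def by (intro continuous_intros) auto

lemma phi_meas[measurable]: "phi \<theta> j \<in> borel_measurable borel"
  by (intro borel_measurable_continuous_onI phi_cont)

lemma cnj_phi_meas[measurable]: "(\<lambda>x. cnj (phi \<theta> j x)) \<in> borel_measurable borel"
  by (intro borel_measurable_continuous_onI continuous_on_cnj phi_cont)

lemma norm_phi: "norm (phi \<theta> j x) = 1 / sqrt (2 * pi)"
  unfolding phi_def by (simp add: norm_divide norm_exp_i_times)

lemma partial_coef:
  assumes j: "j \<in> {-int N..int N}"
  shows "inner_L2 (\<lambda>x. partial_sol \<theta> a0 a1 a2 u0 N x t) (phi \<theta> j) =
    inner_L2 u0 (phi \<theta> j) * exp (- \<i> * complex_of_real (Ppoly a0 a1 a2 (real_of_int j + \<theta>) * t))"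
proof -
  define C where "C l = inner_L2 u0 (phi \<theta> l) * exp (- \<i> * complex_of_real (Ppoly a0 a1 a2 (real_of_int l + \<theta>) * t))" for l
  have ii: "integrable lborel (\<lambda>x. indicator {0..2*pi} x *\<^sub>R (phi \<theta> l x * cnj (phi \<theta> j x)))" for l
  proof -
    have "continuous_on {0..2*pi} (\<lambda>x. phi \<theta> l x * cnj (phi \<theta> j x))"
      by (intro continuous_on_mult continuous_on_cnj phi_cont)
    then show ?thesis using setint_cont[of 0 "2*pi" "\<lambda>x. phi \<theta> l x * cnj (phi \<theta> j x)"]
      unfolding set_integrable_def by blast
  qed
  have "inner_L2 (\<lambda>x. partial_sol \<theta> a0 a1 a2 u0 N x t) (phi \<theta> j) =
     (\<integral>x. (\<Sum>l\<in>{-int N..int N}. C l * (indicator {0..2*pi} x *\<^sub>R (phi \<theta> l x * cnj (phi \<theta> j x)))) \<partial>lborel)"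
    unfolding inner_L2_def partial_sol_def set_lebesgue_integral_def C_def
    by (intro Bochner_Integration.integral_cong refl) (simp add: sum_distrib_right sum_distrib_left algebra_simps scaleR_conv_of_real)
  also have "\<dots> = (\<Sum>l\<in>{-int N..int N}. \<integral>x. C l * (indicator {0..2*pi} x *\<^sub>R (phi \<theta> l x * cnj (phi \<theta> j x))) \<partial>lborel)"
    apply (rule Bochner_Integration.integral_sum[where f="\<lambda>l x. C l * (indicator {0..2*pi} x *\<^sub>R (phi \<theta> l x * cnj (phi \<theta> j x)))"])
    apply (rule integrable_mult_right)
    apply (rule ii)
    done
  also have "\<dots> = (\<Sum>l\<in>{-int N..int N}. C l * (if l = j then 1 else 0))"
    using phi_ortho[of \<theta>] unfolding set_lebesgue_integral_def by (simp only: integral_mult_right_zero)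
  also have "\<dots> = (\<Sum>l\<in>{-int N..int N}. if l = j then C l else 0)" by (intro sum.cong) auto
  also have "\<dots> = C j" using j by (simp add: sum.delta)
  finally show ?thesis unfolding C_def .
qed

lemma set_int_bdd:
  fixes f :: "real \<Rightarrow> complex" and g :: "real \<Rightarrow> real"
  assumes "set_integrable lborel S g" "f \<in> borel_measurable borel" "S \<in> sets borel"
    and "\<And>x. x \<in> S \<Longrightarrow> norm (f x) \<le> g x"
  shows "set_integrable lborel S f"
proof (rule set_integrable_bound[OF assms(1)])
  show "set_borel_measurable lborel S f" using assms(2,3) unfolding set_borel_measurable_def by measurable
  show "AE x in lborel. x \<in> S \<longrightarrow> norm (f x) \<le> norm (g x)"
    using assms(4) by (auto intro!: AE_I2 order_trans[OF _ abs_ge_self])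
qed

lemma set_int_mult_bdd:
  fixes f h :: "real \<Rightarrow> complex"
  assumes "set_integrable lborel S f" "h \<in> borel_measurable borel" "\<And>x. norm (h x) \<le> B"
  shows "set_integrable lborel S (\<lambda>x. f x * h x)"
proof -
  have "integrable lborel (\<lambda>x. (indicator S x *\<^sub>R f x) * h x)"
    using assms(1) unfolding set_integrable_def by (rule integrable_mult_bdd[OF _ assms(2,3)])
  then show ?thesis unfolding set_integrable_def by (simp add: mult.assoc)
qed

lemma aux_sq: "(r::real) \<le> 1 + r^2"
proof -
  have "0 \<le> (r - 1)^2" by simp
  then have "2 * r \<le> 1 + r^2" by (simp add: power2_eq_square algebra_simps)
  moreover have "0 \<le> r^2" by simp
  ultimately show ?thesis by linarith
qed

lemma L2_int:
  assumes "in_L2 f"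
  shows "set_integrable lborel {0..2*pi} f"
proof (rule set_int_bdd)
  have a: "set_integrable lborel {0..2*pi} (\<lambda>x. (cmod (f x))^2)" using assms unfolding in_L2_def by simp
  have b: "set_integrable lborel {0..2*pi} (\<lambda>x. 1::real)"
    unfolding set_integrable_def by (simp add: integrable_indicator_iff emeasure_lborel_Icc_eq)
  show "set_integrable lborel {0..2*pi} (\<lambda>x. 1 + (cmod (f x))^2)" by (rule set_integral_add(1)[OF b a])
  show "f \<in> borel_measurable borel" using assms unfolding in_L2_def by simp
  show "{0..2*pi} \<in> sets borel" by simp
  fix x
  show "norm (f x) \<le> 1 + (cmod (f x))^2"
    by (rule aux_sq)
qed

lemma norm_phi_le1: "norm (phi \<theta> j x) \<le> 1"
proof -
  have "1 \<le> sqrt (2 * pi)" using pi_gt3 by (simp add: real_le_rsqrt)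
  then show ?thesis unfolding norm_phi by simp
qed

lemma amgm_aux:
  fixes r e :: real assumes "e > 0"
  shows "r \<le> e / 2 + r^2 / (2 * e)"
proof -
  have "0 \<le> (r - e)^2" by simp
  then have "2 * e * r \<le> r^2 + e^2" by (simp add: power2_eq_square algebra_simps)
  then have "r \<le> (r^2 + e^2) / (2 * e)" using assms by (simp add: field_simps)
  also have "\<dots> = e / 2 + r^2 / (2 * e)" using assms by (simp add: field_simps power2_eq_square)
  finally show ?thesis .
qed

lemma coef_limit:
  fixes U :: "real \<Rightarrow> complex"
  assumes L2: "in_L2 U"
    and conv: "(\<lambda>N. LINT x:{0..2*pi}|lborel. (cmod (U x - partial_sol \<theta> a0 a1 a2 u0 N x t))^2) \<longlonglongrightarrow> 0"
  shows "inner_L2 U (phi \<theta> j) = inner_L2 u0 (phi \<theta> j) * exp (- \<i> * complex_of_real (Ppoly a0 a1 a2 (real_of_int j + \<theta>) * t))"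
proof -
  define P where "P N x = partial_sol \<theta> a0 a1 a2 u0 N x t" for N x
  define D where "D = inner_L2 U (phi \<theta> j) - inner_L2 u0 (phi \<theta> j) * exp (- \<i> * complex_of_real (Ppoly a0 a1 a2 (real_of_int j + \<theta>) * t))"
  define L where "L N = (LINT x:{0..2*pi}|lborel. (cmod (U x - P N x))^2)" for N
  have [measurable]: "U \<in> borel_measurable borel" using L2 unfolding in_L2_def by simp
  have contP: "continuous_on UNIV (P N)" for N
    unfolding P_def partial_sol_def by (intro continuous_intros phi_cont)
  have [measurable]: "P N \<in> borel_measurable borel" for N
    using contP by (rule borel_measurable_continuous_onI)
  have iU: "set_integrable lborel {0..2*pi} U" by (rule L2_int[OF L2])
  have iP: "set_integrable lborel {0..2*pi} (P N)" for N
    by (rule setint_cont) (rule continuous_on_subset[OF contP], simp)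
  have iUc: "set_integrable lborel {0..2*pi} (\<lambda>x. U x * cnj (phi \<theta> j x))"
    by (rule set_int_mult_bdd[OF iU, where B=1]) (auto simp: norm_phi_le1 cnj_phi_meas)
  have iPc: "set_integrable lborel {0..2*pi} (\<lambda>x. P N x * cnj (phi \<theta> j x))" for N
    by (rule set_int_mult_bdd[OF iP, where B=1]) (auto simp: norm_phi_le1 cnj_phi_meas)
  have iU2: "set_integrable lborel {0..2*pi} (\<lambda>x. (cmod (U x))^2)" using L2 unfolding in_L2_def by simp
  have iP2: "set_integrable lborel {0..2*pi} (\<lambda>x. (cmod (P N x))^2)" for N
  proof -
    have "continuous_on {0..2*pi} (\<lambda>x. (cmod (P N x))^2)"
      by (intro continuous_intros continuous_on_subset[OF contP]) auto
    then show ?thesis unfolding set_integrable_def by (intro borel_integrable_compact) auto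
  qed
  have iH2: "set_integrable lborel {0..2*pi} (\<lambda>x. (cmod (U x - P N x))^2)" for N
  proof (rule set_integrable_bound[where f="\<lambda>x. 2 * (cmod (U x))^2 + 2 * (cmod (P N x))^2"])
    show "set_integrable lborel {0..2*pi} (\<lambda>x. 2 * (cmod (U x))^2 + 2 * (cmod (P N x))^2)"
      using iU2 iP2[of N] by (intro set_integral_add(1)) (auto intro: set_integrable_mult_right)
    show "set_borel_measurable lborel {0..2*pi} (\<lambda>x. (cmod (U x - P N x))^2)"
      unfolding set_borel_measurable_def by measurable
    show "AE x in lborel. x \<in> {0..2*pi} \<longrightarrow> norm ((cmod (U x - P N x))^2) \<le> norm (2 * (cmod (U x))^2 + 2 * (cmod (P N x))^2)"
    proof (rule AE_I2, rule impI)
      fix x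
      have "cmod (U x - P N x) \<le> cmod (U x) + cmod (P N x)" by (rule norm_triangle_ineq4)
      then have "(cmod (U x - P N x))^2 \<le> (cmod (U x) + cmod (P N x))^2"
        by (intro power_mono) auto
      also have "\<dots> \<le> 2 * (cmod (U x))^2 + 2 * (cmod (P N x))^2"
      proof -
        have "0 \<le> (cmod (U x) - cmod (P N x))^2" by simp
        then show ?thesis by (simp add: power2_eq_square algebra_simps)
      qed
      finally show "norm ((cmod (U x - P N x))^2) \<le> norm (2 * (cmod (U x))^2 + 2 * (cmod (P N x))^2)" by simp
    qed
  qed
  have Db: "norm D \<le> pi * e + L N / (2 * e)" if e: "e > 0" and N: "nat \<bar>j\<bar> \<le> N" for e N
  proof -
    have jN: "j \<in> {-int N..int N}" using N by auto
    have "D = inner_L2 U (phi \<theta> j) - inner_L2 (P N) (phi \<theta> j)"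
      unfolding D_def P_def using partial_coef[OF jN, of \<theta> a0 a1 a2 u0 t] by simp
    also have "\<dots> = (LINT x:{0..2*pi}|lborel. U x * cnj (phi \<theta> j x) - P N x * cnj (phi \<theta> j x))"
      unfolding inner_L2_def using iUc iPc[of N] by (simp add: set_integral_diff(2))
    finally have Deq: "D = (LINT x:{0..2*pi}|lborel. (U x - P N x) * cnj (phi \<theta> j x))"
      by (simp add: algebra_simps)
    have iHc: "set_integrable lborel {0..2*pi} (\<lambda>x. (U x - P N x) * cnj (phi \<theta> j x))"
      using set_integral_diff(1)[OF iUc iPc[of N]] by (simp add: algebra_simps)
    have b: "set_integrable lborel {0..2*pi} (\<lambda>x. e / 2)"
        unfolding set_integrable_def by (simp add: integrable_indicator_iff emeasure_lborel_Icc_eq)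
      have c: "set_integrable lborel {0..2*pi} (\<lambda>x. (cmod (U x - P N x))^2 / (2 * e))"
        using set_integrable_mult_right[of "1 / (2*e)" lborel "{0..2*pi}" "\<lambda>x. (cmod (U x - P N x))^2"] iH2[of N]
        by simp
    have iC: "set_integrable lborel {0..2*pi} (\<lambda>x. e / 2 + (cmod (U x - P N x))^2 / (2 * e))"
      by (rule set_integral_add(1)[OF b c])
    have "norm D \<le> (LINT x:{0..2*pi}|lborel. norm ((U x - P N x) * cnj (phi \<theta> j x)))"
      unfolding Deq by (rule set_integral_norm_bound[OF iHc])
    also have "\<dots> \<le> (LINT x:{0..2*pi}|lborel. e / 2 + (cmod (U x - P N x))^2 / (2 * e))"
    proof (rule set_integral_mono)
      show "set_integrable lborel {0..2*pi} (\<lambda>x. norm ((U x - P N x) * cnj (phi \<theta> j x)))"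
        by (rule set_integrable_norm[OF iHc])
      show "set_integrable lborel {0..2*pi} (\<lambda>x. e / 2 + (cmod (U x - P N x))^2 / (2 * e))" by (rule iC)
      fix x
      have "norm ((U x - P N x) * cnj (phi \<theta> j x)) \<le> cmod (U x - P N x)"
        using norm_phi_le1[of \<theta> j x] by (simp add: norm_mult mult_left_le)
      also have "\<dots> \<le> e / 2 + (cmod (U x - P N x))^2 / (2 * e)" by (rule amgm_aux[OF e])
      finally show "norm ((U x - P N x) * cnj (phi \<theta> j x)) \<le> e / 2 + (cmod (U x - P N x))^2 / (2 * e)" .
    qed
    also have "\<dots> = (LINT x:{0..2*pi}|lborel. e / 2) + (LINT x:{0..2*pi}|lborel. (cmod (U x - P N x))^2 / (2 * e))"
      by (rule set_integral_add(2)[OF b c])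
    also have "(LINT x:{0..2*pi}|lborel. e / 2) = pi * e"
      by (subst set_integral_const) (auto simp: emeasure_lborel_Icc_eq)
    also have "(LINT x:{0..2*pi}|lborel. (cmod (U x - P N x))^2 / (2 * e)) = L N / (2 * e)"
      unfolding L_def by (simp add: set_integral_divide_zero)
    finally show ?thesis .
  qed
  have "norm D \<le> e * pi" if e: "e > 0" for e
  proof -
    have lim: "(\<lambda>N. pi * e + L N / (2 * e)) \<longlonglongrightarrow> pi * e + 0 / (2 * e)"
      using conv e unfolding L_def P_def by (intro tendsto_intros) auto
    have "norm D \<le> pi * e + 0 / (2 * e)"
      by (rule LIMSEQ_le_const[OF lim]) (use Db[OF e] in blast)
    then show ?thesis by (simp add: mult.commute)
  qed
  then have "D = 0" by (intro small_zero[where K=pi]) auto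
  then show ?thesis unfolding D_def by simp
qed


lemma per_ext_periodic: "per_ext f (x + 2*pi * of_int k) = per_ext f x"
proof -
  have "(x + 2*pi * of_int k) / (2*pi) = x / (2*pi) + of_int k" by (simp add: field_simps)
  then have "\<lfloor>(x + 2*pi * of_int k) / (2*pi)\<rfloor> = \<lfloor>x / (2*pi)\<rfloor> + k" by simp
  then show ?thesis unfolding per_ext_def by (simp add: algebra_simps)
qed

lemma per_ext_eq: "0 \<le> x \<Longrightarrow> x < 2*pi \<Longrightarrow> per_ext f x = f x"
proof -
  assume x: "0 \<le> x" "x < 2*pi"
  have "\<lfloor>x / (2*pi)\<rfloor> = 0" using x by (simp add: floor_eq_iff field_simps)
  then show ?thesis unfolding per_ext_def by simp
qed

lemma per_ext_meas[measurable]: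
  assumes [measurable]: "f \<in> borel_measurable borel"
  shows "per_ext f \<in> borel_measurable borel"
  unfolding per_ext_def by measurable

lemma set_integral_cong_AE_S:
  fixes f g :: "real \<Rightarrow> complex"
  assumes [measurable]: "f \<in> borel_measurable borel" "g \<in> borel_measurable borel"
    and ae: "\<And>x. x \<in> S \<Longrightarrow> x \<noteq> b \<Longrightarrow> f x = g x" and [measurable]: "S \<in> sets borel"
  shows "set_integrable lborel S f \<longleftrightarrow> set_integrable lborel S g"
    and "(LINT x:S|lborel. f x) = (LINT x:S|lborel. g x)"
proof -
  have a: "AE x in lborel. indicator S x *\<^sub>R f x = indicator S x *\<^sub>R g x"
    using AE_lborel_singleton[of b] by eventually_elim (auto simp: ae indicator_def)
  show "set_integrable lborel S f \<longleftrightarrow> set_integrable lborel S g"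
    unfolding set_integrable_def by (rule integrable_cong_AE) (use a in auto)
  show "(LINT x:S|lborel. f x) = (LINT x:S|lborel. g x)"
    unfolding set_lebesgue_integral_def by (rule integral_cong_AE) (use a in auto)
qed

lemma exp_ij_meas[measurable]: "(\<lambda>x. exp (a * complex_of_real (r * x))) \<in> borel_measurable borel"
  by (intro borel_measurable_continuous_onI continuous_intros)

lemma shift_coef:
  fixes f :: "real \<Rightarrow> complex"
  assumes [measurable]: "f \<in> borel_measurable borel" and int: "set_integrable lborel {0..2*pi} f"
  shows "set_integrable lborel {0..2*pi} (\<lambda>x. per_ext f (x + c) * exp (- \<i> * of_real (of_int j * x)))"
    and "(LINT x:{0..2*pi}|lborel. per_ext f (x + c) * exp (- \<i> * of_real (of_int j * x))) =
         exp (\<i> * of_real (of_int j * c)) * (LINT x:{0..2*pi}|lborel. f x * exp (- \<i> * of_real (of_int j * x)))"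
proof -
  define F where "F y = per_ext f y * exp (- \<i> * of_real (of_int j * y))" for y
  have [measurable]: "F \<in> borel_measurable borel" unfolding F_def by measurable
  have per: "F (x + 2*pi * of_int k) = F x" for x k
  proof -
    have "exp (- \<i> * of_real (of_int j * (x + 2*pi * of_int k))) = exp (- \<i> * of_real (of_int j * x)) * exp (\<i> * of_real (of_int (- j * k) * (2*pi)))"
      by (simp add: exp_add[symmetric] algebra_simps)
    also have "exp (\<i> * of_real (of_int (- j * k) * (2*pi))) = 1" by (rule exp_int_2pi)
    finally show ?thesis unfolding F_def by (simp add: per_ext_periodic)
  qed
  have ifx: "set_integrable lborel {0..2*pi} (\<lambda>x. f x * exp (- \<i> * of_real (of_int j * x)))"
    by (rule set_int_mult_bdd[OF int, where B=1]) (auto simp: norm_exp_i_times[of "- (of_int j * _)", simplified])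
  have ceq: "x \<in> {0..2*pi} \<Longrightarrow> x \<noteq> 2*pi \<Longrightarrow> F x = f x * exp (- \<i> * of_real (of_int j * x))" for x
    unfolding F_def by (simp add: per_ext_eq)
  have iF: "set_integrable lborel {0..2*pi} F"
    using set_integral_cong_AE_S(1)[of F "\<lambda>x. f x * exp (- \<i> * of_real (of_int j * x))" "{0..2*pi}" "2*pi", OF _ _ ceq] ifx by simp
  have IF: "(LINT x:{0..2*pi}|lborel. F x) = (LINT x:{0..2*pi}|lborel. f x * exp (- \<i> * of_real (of_int j * x)))"
    using set_integral_cong_AE_S(2)[of F "\<lambda>x. f x * exp (- \<i> * of_real (of_int j * x))" "{0..2*pi}" "2*pi", OF _ _ ceq] by simp
  have e: "per_ext f (x + c) * exp (- \<i> * of_real (of_int j * x)) = exp (\<i> * of_real (of_int j * c)) * F (x + c)" for x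
    unfolding F_def by (simp add: exp_add[symmetric] algebra_simps)
  note P = periodic_shift[OF per _ iF, of c]
  show "set_integrable lborel {0..2*pi} (\<lambda>x. per_ext f (x + c) * exp (- \<i> * of_real (of_int j * x)))"
    unfolding e using P(1) by (intro set_integrable_mult_right) auto
  show "(LINT x:{0..2*pi}|lborel. per_ext f (x + c) * exp (- \<i> * of_real (of_int j * x))) =
         exp (\<i> * of_real (of_int j * c)) * (LINT x:{0..2*pi}|lborel. f x * exp (- \<i> * of_real (of_int j * x)))"
    unfolding e using P(2) IF by simp
qed


lemma set_int_sum:
  fixes f :: "'i \<Rightarrow> real \<Rightarrow> complex"
  assumes "\<And>i. i \<in> I \<Longrightarrow> set_integrable lborel A (f i)"
  shows "set_integrable lborel A (\<lambda>x. \<Sum>i\<in>I. f i x)"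
    and "(LINT x:A|lborel. (\<Sum>i\<in>I. f i x)) = (\<Sum>i\<in>I. LINT x:A|lborel. f i x)"
proof -
  have i: "\<And>i. i \<in> I \<Longrightarrow> integrable lborel (\<lambda>x. indicator A x *\<^sub>R f i x)"
    using assms unfolding set_integrable_def by auto
  show "set_integrable lborel A (\<lambda>x. \<Sum>i\<in>I. f i x)"
    unfolding set_integrable_def scaleR_sum_right
    by (rule Bochner_Integration.integrable_sum[where f="\<lambda>i x. indicator A x *\<^sub>R f i x"]) (rule i)
  show "(LINT x:A|lborel. (\<Sum>i\<in>I. f i x)) = (\<Sum>i\<in>I. LINT x:A|lborel. f i x)"
    unfolding set_lebesgue_integral_def scaleR_sum_right
    by (rule Bochner_Integration.integral_sum[where f="\<lambda>i x. indicator A x *\<^sub>R f i x"]) (rule i)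
qed

lemma exp_theta_cnj_phi:
  "exp (\<i> * of_real (\<theta> * x)) * cnj (phi \<theta> j x) = exp (- \<i> * of_real (of_int j * x)) / of_real (sqrt (2 * pi))"
proof -
  have "exp (\<i> * of_real (\<theta> * x)) * cnj (phi \<theta> j x) =
     exp (\<i> * of_real (\<theta> * x)) * exp (- (\<i> * of_real ((of_int j + \<theta>) * x))) / of_real (sqrt (2 * pi))"
    unfolding phi_def by (simp add: exp_cnj)
  also have "exp (\<i> * of_real (\<theta> * x)) * exp (- (\<i> * of_real ((of_int j + \<theta>) * x))) = exp (- \<i> * of_real (of_int j * x))"
    by (simp add: exp_add[symmetric] algebra_simps)
  finally show ?thesis .
qed

lemma u0_coef:
  "(LINT x:{0..2*pi}|lborel. (exp (- \<i> * of_real (\<theta> * x)) * u0 x) * exp (- \<i> * of_real (of_int j * x)))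
     = of_real (sqrt (2 * pi)) * inner_L2 u0 (phi \<theta> j)"
proof -
  have e: "(exp (- \<i> * of_real (\<theta> * x)) * u0 x) * exp (- \<i> * of_real (of_int j * x)) =
      of_real (sqrt (2 * pi)) * (u0 x * cnj (phi \<theta> j x))" for x
  proof -
    have "exp (- \<i> * of_real (\<theta> * x)) * exp (- \<i> * of_real (of_int j * x)) = exp (- (\<i> * of_real ((of_int j + \<theta>) * x)))"
      by (simp add: exp_add[symmetric] algebra_simps)
    then show ?thesis unfolding phi_def by (simp add: exp_cnj)
  qed
  show ?thesis unfolding e inner_L2_def by simp
qed

lemma w_coef:
  fixes u0 :: "real \<Rightarrow> complex" and c :: "nat \<Rightarrow> complex" and \<sigma> :: "nat \<Rightarrow> real" and \<theta> :: real
  assumes [measurable]: "u0 \<in> borel_measurable borel" and iu: "set_integrable lborel {0..2*pi} u0"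
  defines "z0 \<equiv> \<lambda>y. exp (- \<i> * complex_of_real (\<theta> * y)) * u0 y"
  shows "set_integrable lborel {0..2*pi} (\<lambda>x. exp (\<i> * complex_of_real (\<theta> * x)) * (\<Sum>k<q. c k * per_ext z0 (x - \<sigma> k)))"
    and "inner_L2 (\<lambda>x. exp (\<i> * complex_of_real (\<theta> * x)) * (\<Sum>k<q. c k * per_ext z0 (x - \<sigma> k))) (phi \<theta> j)
       = inner_L2 u0 (phi \<theta> j) * (\<Sum>k<q. c k * exp (- \<i> * of_real (of_int j * \<sigma> k)))"
proof -
  have [measurable]: "z0 \<in> borel_measurable borel" unfolding z0_def by measurable
  have iz: "set_integrable lborel {0..2*pi} z0"
  proof -
    have "set_integrable lborel {0..2*pi} (\<lambda>y. u0 y * exp (- \<i> * complex_of_real (\<theta> * y)))"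
      by (rule set_int_mult_bdd[OF iu, where B=1]) (auto simp: norm_exp_i_times[of "- (_ * _)", simplified])
    then show ?thesis unfolding z0_def by (simp add: mult.commute)
  qed
  note SC = shift_coef[of z0, OF _ iz]
  have sc1: "set_integrable lborel {0..2*pi} (\<lambda>x. per_ext z0 (x - s) * exp (- \<i> * of_real (of_int j * x)))" for s j
    using SC(1)[of "- s" j] by simp
  have sc2: "(LINT x:{0..2*pi}|lborel. per_ext z0 (x - s) * exp (- \<i> * of_real (of_int j * x))) =
         exp (- \<i> * of_real (of_int j * s)) * (LINT x:{0..2*pi}|lborel. z0 x * exp (- \<i> * of_real (of_int j * x)))" for s j
    using SC(2)[of "- s" j] by simp
  have it: "set_integrable lborel {0..2*pi} (\<lambda>x. c k * (exp (\<i> * complex_of_real (\<theta> * x)) * per_ext z0 (x - \<sigma> k)))" for k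
  proof -
    have "set_integrable lborel {0..2*pi} (\<lambda>x. per_ext z0 (x - \<sigma> k) * exp (\<i> * complex_of_real (\<theta> * x)))"
      using sc1[of "\<sigma> k" 0] by (intro set_int_mult_bdd[where B=1]) (auto simp: norm_exp_i_times)
    then show ?thesis by (intro set_integrable_mult_right) (auto simp: mult.commute)
  qed
  have weq: "exp (\<i> * complex_of_real (\<theta> * x)) * (\<Sum>k<q. c k * per_ext z0 (x - \<sigma> k)) =
      (\<Sum>k<q. c k * (exp (\<i> * complex_of_real (\<theta> * x)) * per_ext z0 (x - \<sigma> k)))" for x
    by (simp add: sum_distrib_left algebra_simps)
  show "set_integrable lborel {0..2*pi} (\<lambda>x. exp (\<i> * complex_of_real (\<theta> * x)) * (\<Sum>k<q. c k * per_ext z0 (x - \<sigma> k)))"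
    unfolding weq by (rule set_int_sum(1)) (rule it)
  have peq: "exp (\<i> * complex_of_real (\<theta> * x)) * (\<Sum>k<q. c k * per_ext z0 (x - \<sigma> k)) * cnj (phi \<theta> j x) =
      (\<Sum>k<q. (c k / of_real (sqrt (2 * pi))) * (per_ext z0 (x - \<sigma> k) * exp (- \<i> * of_real (of_int j * x))))" for x
  proof -
    have "exp (\<i> * complex_of_real (\<theta> * x)) * (\<Sum>k<q. c k * per_ext z0 (x - \<sigma> k)) * cnj (phi \<theta> j x) =
        (\<Sum>k<q. c k * per_ext z0 (x - \<sigma> k)) * (exp (\<i> * complex_of_real (\<theta> * x)) * cnj (phi \<theta> j x))"
      by (simp add: algebra_simps)
    also have "\<dots> = (\<Sum>k<q. c k * per_ext z0 (x - \<sigma> k)) * (exp (- \<i> * of_real (of_int j * x)) / of_real (sqrt (2 * pi)))"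
      by (simp only: exp_theta_cnj_phi)
    also have "\<dots> = (\<Sum>k<q. (c k / of_real (sqrt (2 * pi))) * (per_ext z0 (x - \<sigma> k) * exp (- \<i> * of_real (of_int j * x))))"
      by (simp add: sum_distrib_left sum_distrib_right sum_divide_distrib mult_ac)
    finally show ?thesis .
  qed
  have "inner_L2 (\<lambda>x. exp (\<i> * complex_of_real (\<theta> * x)) * (\<Sum>k<q. c k * per_ext z0 (x - \<sigma> k))) (phi \<theta> j)
      = (LINT x:{0..2*pi}|lborel. (\<Sum>k<q. (c k / of_real (sqrt (2 * pi))) * (per_ext z0 (x - \<sigma> k) * exp (- \<i> * of_real (of_int j * x)))))"
    unfolding inner_L2_def peq ..
  also have "\<dots> = (\<Sum>k<q. LINT x:{0..2*pi}|lborel. (c k / of_real (sqrt (2 * pi))) * (per_ext z0 (x - \<sigma> k) * exp (- \<i> * of_real (of_int j * x))))"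
    by (rule set_int_sum(2)) (intro set_integrable_mult_right sc1)
  also have "\<dots> = (\<Sum>k<q. (c k / of_real (sqrt (2 * pi))) * (exp (- \<i> * of_real (of_int j * \<sigma> k)) * (of_real (sqrt (2 * pi)) * inner_L2 u0 (phi \<theta> j))))"
    by (simp only: set_integral_mult_right sc2) (simp only: z0_def u0_coef)
  also have "\<dots> = inner_L2 u0 (phi \<theta> j) * (\<Sum>k<q. c k * exp (- \<i> * of_real (of_int j * \<sigma> k)))"
    by (simp add: sum_distrib_left algebra_simps)
  finally show "inner_L2 (\<lambda>x. exp (\<i> * complex_of_real (\<theta> * x)) * (\<Sum>k<q. c k * per_ext z0 (x - \<sigma> k))) (phi \<theta> j)
       = inner_L2 u0 (phi \<theta> j) * (\<Sum>k<q. c k * exp (- \<i> * of_real (of_int j * \<sigma> k)))" .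
qed


lemma exp_cnj_phi_neg:
  "exp (- \<i> * of_real (\<theta> * x)) * exp (\<i> * of_real (of_int k * x)) = of_real (sqrt (2 * pi)) * cnj (phi \<theta> (- k) x)"
proof -
  have "exp (- \<i> * of_real (\<theta> * x)) * exp (\<i> * of_real (of_int k * x)) = exp (- (\<i> * of_real ((of_int (- k) + \<theta>) * x)))"
    by (simp add: exp_add[symmetric] algebra_simps)
  then show ?thesis unfolding phi_def by (simp add: exp_cnj)
qed

lemma quad_period:
  fixes q :: nat and A j :: int
  assumes q: "q > 0"
  shows "exp (- \<i> * of_real (2 * pi * of_int (A * (j mod int q)^2) / real q)) = exp (- \<i> * of_real (2 * pi * of_int (A * j^2) / real q))"
proof -
  define r where "r = j mod int q"
  define n where "n = j div int q"
  have j: "j = int q * n + r" unfolding r_def n_def by simp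
  define M where "M = A * (2 * n * r + int q * n^2)"
  have "A * j^2 = A * r^2 + int q * M" unfolding j M_def by (simp add: power2_eq_square algebra_simps)
  then have "real_of_int (A * j^2) = real_of_int (A * r^2) + real q * real_of_int M"
    by (metis of_int_add of_int_mult of_int_of_nat_eq)
  then have e: "2 * pi * of_int (A * j^2) / real q = 2 * pi * of_int (A * r^2) / real q + of_int M * (2 * pi)"
    using q by (simp add: field_simps)
  have "exp (- \<i> * of_real (2 * pi * of_int (A * j^2) / real q)) =
      exp (- \<i> * of_real (2 * pi * of_int (A * r^2) / real q) + \<i> * of_real (of_int (- M) * (2 * pi)))"
    unfolding e by (intro arg_cong[where f=exp]) (simp add: algebra_simps)
  also have "\<dots> = exp (- \<i> * of_real (2 * pi * of_int (A * r^2) / real q))"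
    by (simp only: exp_add exp_int_2pi mult_1_right)
  finally show ?thesis unfolding r_def by simp
qed


theorem mainTheorem6:
  fixes \<theta> :: real and a0 a1 a2 :: int and u0 :: "real \<Rightarrow> complex"
    and u :: "real \<Rightarrow> real \<Rightarrow> complex" and p q :: nat
  assumes "0 < \<theta>" "\<theta> < 1" "a2 \<noteq> 0"
    and "in_L2 u0"
    and "0 < p" "0 < q" "coprime p q"
    and "is_L2_solution \<theta> a0 a1 a2 u0 u"
  shows "\<exists>c :: nat \<Rightarrow> complex. AE x in lborel. x \<in> {0..2*pi} \<longrightarrow>
           u x (2 * pi * real p / real q) =
             exp (\<i> * complex_of_real (\<theta> * x)) *
             (\<Sum>k<q. c k * per_ext (\<lambda>y. exp (- \<i> * complex_of_real (\<theta> * y)) * u0 y)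
                (x - (real_of_int a1 + 2 * real_of_int a2 * \<theta>) * (2 * pi * real p / real q)
                   - 2 * pi * real k / real q))"
proof -
  note L2u0 = assms(4) and q = assms(6) and sol = assms(8)
  define t where "t = 2 * pi * real p / real q"
  define s where "s = real_of_int a1 + 2 * real_of_int a2 * \<theta>"
  define z0 where "z0 = (\<lambda>y. exp (- \<i> * complex_of_real (\<theta> * y)) * u0 y)"
  define K where "K = exp (- \<i> * of_real ((real_of_int a0 + real_of_int a1 * \<theta> + real_of_int a2 * \<theta>^2) * t))"
  define g where "g j = K * exp (- \<i> * of_real (2 * pi * of_int (a2 * int p * j^2) / real q))" for j :: int
  have per: "g (j mod int q) = g j" for j
    unfolding g_def using quad_period[OF q, of "a2 * int p" j] by simp
  obtain c where c: "\<And>j. (\<Sum>k<q. c k * exp (- (\<i> * of_real (2 * pi * of_int j * of_nat k / of_nat q)))) = g j"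
    using dft_exists[of q g, OF q per] by blast
  define \<sigma> where "\<sigma> k = s * t + 2 * pi * real k / real q" for k :: nat
  define w where "w x = exp (\<i> * complex_of_real (\<theta> * x)) * (\<Sum>k<q. c k * per_ext z0 (x - \<sigma> k))" for x
  define E where "E j = exp (- \<i> * complex_of_real (Ppoly a0 a1 a2 (real_of_int j + \<theta>) * t))" for j :: int
  have u0m[measurable]: "u0 \<in> borel_measurable borel" using L2u0 unfolding in_L2_def by simp
  have iu0: "set_integrable lborel {0..2*pi} u0" by (rule L2_int[OF L2u0])
  have L2u: "in_L2 (\<lambda>x. u x t)" and conv: "(\<lambda>N. LINT x:{0..2*pi}|lborel. (cmod (u x t - partial_sol \<theta> a0 a1 a2 u0 N x t))^2) \<longlonglongrightarrow> 0"
    using sol unfolding is_L2_solution_def by auto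
  have um[measurable]: "(\<lambda>x. u x t) \<in> borel_measurable borel" using L2u unfolding in_L2_def by simp
  have iu: "set_integrable lborel {0..2*pi} (\<lambda>x. u x t)" by (rule L2_int[OF L2u])
  have coefU: "inner_L2 (\<lambda>x. u x t) (phi \<theta> j) = inner_L2 u0 (phi \<theta> j) * E j" for j
    unfolding E_def by (rule coef_limit[OF L2u conv])
  note W = w_coef[OF u0m iu0, where \<theta>=\<theta> and q=q and c=c and \<sigma>=\<sigma>]
  have iw: "set_integrable lborel {0..2*pi} w" using W(1) unfolding w_def z0_def .
  have key: "(\<Sum>k<q. c k * exp (- \<i> * of_real (of_int j * \<sigma> k))) = E j" for j
  proof -
    have "(\<Sum>k<q. c k * exp (- \<i> * of_real (of_int j * \<sigma> k)))
        = (\<Sum>k<q. exp (- \<i> * of_real (of_int j * s * t)) * (c k * exp (- (\<i> * of_real (2 * pi * of_int j * of_nat k / of_nat q)))))"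
    proof (intro sum.cong refl)
      fix k
      have "exp (- \<i> * of_real (of_int j * \<sigma> k)) = exp (- \<i> * of_real (of_int j * s * t) + - (\<i> * of_real (2 * pi * of_int j * of_nat k / of_nat q)))"
        unfolding \<sigma>_def by (intro arg_cong[where f=exp]) (simp add: algebra_simps)
      then show "c k * exp (- \<i> * of_real (of_int j * \<sigma> k)) =
          exp (- \<i> * of_real (of_int j * s * t)) * (c k * exp (- (\<i> * of_real (2 * pi * of_int j * of_nat k / of_nat q))))"
        unfolding exp_add by (simp only: mult.left_commute)
    qed
    also have "\<dots> = exp (- \<i> * of_real (of_int j * s * t)) * g j"
      by (simp only: sum_distrib_left[symmetric] c)
    also have "\<dots> = E j"
    proof -
      have "Ppoly a0 a1 a2 (real_of_int j + \<theta>) * t = of_int j * s * t + (real_of_int a0 + real_of_int a1 * \<theta> + real_of_int a2 * \<theta>^2) * t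
          + 2 * pi * of_int (a2 * int p * j^2) / real q"
        unfolding Ppoly_def s_def t_def using q by (simp add: field_simps power2_eq_square)
      then have "E j = exp (- \<i> * of_real (of_int j * s * t) + - \<i> * of_real ((real_of_int a0 + real_of_int a1 * \<theta> + real_of_int a2 * \<theta>^2) * t)
          + - \<i> * of_real (2 * pi * of_int (a2 * int p * j^2) / real q))"
        unfolding E_def by (intro arg_cong[where f=exp]) (simp add: algebra_simps)
      then show ?thesis by (simp only: g_def K_def exp_add mult.assoc)
    qed
    finally show ?thesis .
  qed
  have coefW: "inner_L2 w (phi \<theta> j) = inner_L2 u0 (phi \<theta> j) * E j" for j
    using W(2)[of j] key unfolding w_def z0_def by simp
  define G where "G x = indicator {0..2*pi} x *\<^sub>R ((u x t - w x) * exp (- \<i> * of_real (\<theta> * x)))" for x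
  have [measurable]: "w \<in> borel_measurable borel" unfolding w_def z0_def by measurable
  have iuw: "set_integrable lborel {0..2*pi} (\<lambda>x. u x t - w x)" by (rule set_integral_diff(1)[OF iu iw])
  have intG: "integrable lborel G"
  proof -
    have "set_integrable lborel {0..2*pi} (\<lambda>x. (u x t - w x) * exp (- \<i> * of_real (\<theta> * x)))"
      by (rule set_int_mult_bdd[OF iuw, where B=1]) (auto simp: norm_exp_i_times[of "- (_ * _)", simplified])
    then show ?thesis unfolding set_integrable_def G_def .
  qed
  have hz: "(\<integral>x. G x * exp (\<i> * of_real (of_int k * x)) \<partial>lborel) = 0" for k :: int
  proof -
    have iuc: "set_integrable lborel {0..2*pi} (\<lambda>x. u x t * cnj (phi \<theta> (- k) x))"
      by (rule set_int_mult_bdd[OF iu, where B=1]) (auto simp: norm_phi_le1)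
    have iwc: "set_integrable lborel {0..2*pi} (\<lambda>x. w x * cnj (phi \<theta> (- k) x))"
      by (rule set_int_mult_bdd[OF iw, where B=1]) (auto simp: norm_phi_le1)
    have "(\<integral>x. G x * exp (\<i> * of_real (of_int k * x)) \<partial>lborel)
        = (LINT x:{0..2*pi}|lborel. of_real (sqrt (2 * pi)) * (u x t * cnj (phi \<theta> (- k) x) - w x * cnj (phi \<theta> (- k) x)))"
      unfolding set_lebesgue_integral_def G_def
    proof (intro Bochner_Integration.integral_cong refl)
      fix x
      show "indicat_real {0..2 * pi} x *\<^sub>R ((u x t - w x) * exp (- \<i> * complex_of_real (\<theta> * x))) * exp (\<i> * complex_of_real (real_of_int k * x)) =
          indicat_real {0..2 * pi} x *\<^sub>R (of_real (sqrt (2 * pi)) * (u x t * cnj (phi \<theta> (- k) x) - w x * cnj (phi \<theta> (- k) x)))"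
        using exp_cnj_phi_neg[of \<theta> x k] by (simp add: algebra_simps)
    qed
    also have "\<dots> = of_real (sqrt (2 * pi)) * (inner_L2 (\<lambda>x. u x t) (phi \<theta> (- k)) - inner_L2 w (phi \<theta> (- k)))"
      unfolding inner_L2_def using iuc iwc by (simp add: set_integral_diff(2))
    also have "\<dots> = 0" using coefU coefW by simp
    finally show ?thesis .
  qed
  have supp: "G x = 0" if "x \<notin> {0..2*pi}" for x using that unfolding G_def by simp
  have ae: "AE x in lborel. G x = 0" by (rule fourier_unique[OF intG hz supp])
  have "AE x in lborel. x \<in> {0..2*pi} \<longrightarrow> u x t = w x"
    using ae
  proof eventually_elim
    case (elim x)
    then show ?case unfolding G_def by auto
  qed
  then have "AE x in lborel. x \<in> {0..2*pi} \<longrightarrow>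
           u x (2 * pi * real p / real q) =
             exp (\<i> * complex_of_real (\<theta> * x)) *
             (\<Sum>k<q. c k * per_ext (\<lambda>y. exp (- \<i> * complex_of_real (\<theta> * y)) * u0 y)
                (x - (real_of_int a1 + 2 * real_of_int a2 * \<theta>) * (2 * pi * real p / real q)
                   - 2 * pi * real k / real q))"
    unfolding w_def z0_def \<sigma>_def s_def t_def by (simp add: algebra_simps)
  then show ?thesis by blast
qed

end
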